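(* Let $\eta > 0$, let $\mathbf{a} \in \mathbb{R}_+^n$, $\mathbf{b} \in \mathbb{R}_+^m$ with $\mathbf{1}_n^\top\mathbf{a} = \mathbf{1}_m^\top\mathbf{b} = 1$, let $\mathcal{D} = U(\mu,\nu) = \{\boldsymbol{\Pi} \in \mathbb{R}_+^{n\times m} : \boldsymbol{\Pi}\mathbf{1}_m = \mathbf{a},\ \boldsymbol{\Pi}^\top\mathbf{1}_n = \mathbf{b}\}$, and let $\mathbf{C}_1,\ldots,\mathbf{C}_L \in \mathbb{R}^{n\times m}$. Let $$G_\eta(\boldsymbol{\Pi}) = \eta \log\left( \sum_{\ell=1}^L \exp\left( \tfrac{1}{\eta}\langle \boldsymbol{\Pi}, \mathbf{C}_\ell \rangle \right) \right)$$ and let $\boldsymbol{\Pi}^\ast \in \arg\min_{\boldsymbol{\Pi}\in\mathcal{D}} G_\eta(\boldsymbol{\Pi})$. Consider the Frank--Wolfe iteration: start from $\boldsymbol{\Pi}^{(0)} \in \mathcal{D}$, and for $t = 0, 1, 2, \ldots$ set $$\alpha_\ell^{(t)} = \frac{\exp\left(\frac{1}{\eta}\langle \boldsymbol{\Pi}^{(t)}, \mathbf{C}_\ell\rangle\right)}{\sum_{\ell'=1}^L \exp\left(\frac{1}{\eta}\langle \boldsymbol{\Pi}^{(t)}, \mathbf{C}_{\ell'}\rangle\right)}, \qquad \mathbf{M}_{\boldsymbol{\Pi}^{(t)}} = \sum_{\ell=1}^L \alpha_\ell^{(t)} \mathbf{C}_\ell = \nabla G_\eta(\boldsymbol{\Pi}^{(t)}),$$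 let $\gamma_t = 2/(t+2)$, let $\widehat{\boldsymbol{\Pi}} \in \mathcal{D}$ be an approximate solution of the linear subproblem $\min_{\boldsymbol{\Pi}\in\mathcal{D}} \langle \boldsymbol{\Pi}, \mathbf{M}_{\boldsymbol{\Pi}^{(t)}}\rangle$ with accuracy $\delta \geq 0$, i.e. $\langle \widehat{\boldsymbol{\Pi}}, \mathbf{M}_{\boldsymbol{\Pi}^{(t)}}\rangle \leq \min_{\boldsymbol{\Pi}\in\mathcal{D}} \langle \boldsymbol{\Pi}, \mathbf{M}_{\boldsymbol{\Pi}^{(t)}}\rangle + \tfrac{1}{2}\delta\gamma_t C_f$, and set $\boldsymbol{\Pi}^{(t+1)} = (1-\gamma_t)\boldsymbol{\Pi}^{(t)} + \gamma_t \widehat{\boldsymbol{\Pi}}$. Then for each $t \geq 1$, $$G_\eta(\boldsymbol{\Pi}^{(t)}) - G_\eta(\boldsymbol{\Pi}^\ast) \leq \frac{4\sigma_{\max}(\boldsymbol{\Phi}^\top\boldsymbol{\Phi})}{\eta(t+2)}(1+\delta),$$ where $\boldsymbol{\Phi} = (\mathrm{vec}(\mathbf{C}_1), \ldots, \mathrm{vec}(\mathbf{C}_L))$ (the matrix whose columns are the vectorized cost matrices) and $\sigma_{\max}(\boldsymbol{\Phi}^\top\boldsymbol{\Phi})$ is the largest eigenvalue of $\boldsymbol{\Phi}^\top\boldsymbol{\Phi}$.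
   Context: $\langle \mathbf{A}, \mathbf{B}\rangle = \sum_{i,j}A_{ij}B_{ij}$. $C_f$ denotes the curvature constant of $f = G_\eta$ on $\mathcal{D}$: $C_f = \sup \frac{2}{\gamma^2}\big(f(\boldsymbol{\Pi}') - f(\boldsymbol{\Pi}) - \langle \boldsymbol{\Pi}'-\boldsymbol{\Pi}, \nabla f(\boldsymbol{\Pi})\rangle\big)$ over $\boldsymbol{\Pi}, \widehat{\boldsymbol{\Pi}} \in \mathcal{D}$, $\gamma\in[0,1]$, $\boldsymbol{\Pi}' = \boldsymbol{\Pi} + \gamma(\widehat{\boldsymbol{\Pi}} - \boldsymbol{\Pi})$. The accuracy parameter $\delta$ is in the sense of Jaggi's approximate linear-minimization oracle for Frank--Wolfe (in practice the subproblem may be solved exactly by linear programming or approximately by the entropic-regularized Sinkhorn algorithm). *)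

theory Defs
  imports "HOL-Analysis.Analysis"
begin

text \<open>Matrices in R^{n x m} are represented as real^'m^'n (rows indexed by 'n).
  The L cost matrices are a family C :: 'l \<Rightarrow> real^'m^'n over a finite index type 'l.\<close>

definition frob :: "real^'m::finite^'n::finite \<Rightarrow> real^'m^'n \<Rightarrow> real" where
  "frob A B = (\<Sum>i\<in>UNIV. \<Sum>j\<in>UNIV. A $ i $ j * B $ i $ j)"

definition transport_polytope :: "real^'n::finite \<Rightarrow> real^'m::finite \<Rightarrow> (real^'m^'n) set" where
  "transport_polytope a b =
     {P. (\<forall>i j. 0 \<le> P $ i $ j) \<and> (\<forall>i. (\<Sum>j\<in>UNIV. P $ i $ j) = a $ i)
         \<and> (\<forall>j. (\<Sum>i\<in>UNIV. P $ i $ j) = b $ j)}"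

definition G_eta :: "real \<Rightarrow> ('l::finite \<Rightarrow> real^'m::finite^'n::finite) \<Rightarrow> real^'m^'n \<Rightarrow> real" where
  "G_eta \<eta> C P = \<eta> * ln (\<Sum>l\<in>UNIV. exp (frob P (C l) / \<eta>))"

definition alpha_w :: "real \<Rightarrow> ('l::finite \<Rightarrow> real^'m::finite^'n::finite) \<Rightarrow> real^'m^'n \<Rightarrow> 'l \<Rightarrow> real" where
  "alpha_w \<eta> C P l = exp (frob P (C l) / \<eta>) / (\<Sum>l'\<in>UNIV. exp (frob P (C l') / \<eta>))"

definition M_grad :: "real \<Rightarrow> ('l::finite \<Rightarrow> real^'m::finite^'n::finite) \<Rightarrow> real^'m^'n \<Rightarrow> real^'m^'n" where
  "M_grad \<eta> C P = (\<Sum>l\<in>UNIV. alpha_w \<eta> C P l *\<^sub>R C l)"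

text \<open>Curvature constant C_f of f = G_eta on D (gamma ranging over (0,1]; gamma = 0 makes
  the quotient undefined).\<close>
definition curvature_const ::
  "real \<Rightarrow> ('l::finite \<Rightarrow> real^'m::finite^'n::finite) \<Rightarrow> (real^'m^'n) set \<Rightarrow> real" where
  "curvature_const \<eta> C D =
     (SUP (P, Q, \<gamma>) \<in> {(P, Q, \<gamma>). P \<in> D \<and> Q \<in> D \<and> 0 < \<gamma> \<and> \<gamma> \<le> 1}.
        2 / \<gamma>\<^sup>2 * (G_eta \<eta> C (P + \<gamma> *\<^sub>R (Q - P)) - G_eta \<eta> C P
                     - frob ((P + \<gamma> *\<^sub>R (Q - P)) - P) (M_grad \<eta> C P)))"

definition Phi_mat :: "('l::finite \<Rightarrow> real^'m::finite^'n::finite) \<Rightarrow> real^'l^('n \<times> 'm)" where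
  "Phi_mat C = (\<chi> ij l. C l $ fst ij $ snd ij)"

definition max_eigenvalue :: "real^'k::finite^'k \<Rightarrow> real" where
  "max_eigenvalue A = Max {e. \<exists>v. v \<noteq> 0 \<and> A *v v = e *\<^sub>R v}"

end

theory Submission
  imports Defs
begin

lemma lse_quad:
  fixes s h :: "'l::finite \<Rightarrow> real"
  shows "ln (\<Sum>l\<in>UNIV. exp (s l + h l)) \<le> ln (\<Sum>l\<in>UNIV. exp (s l))
     + (\<Sum>l\<in>UNIV. exp (s l) * h l) / (\<Sum>l\<in>UNIV. exp (s l)) + (\<Sum>l\<in>UNIV. (h l)\<^sup>2) / 2"
proof -
  define S where "S = (\<lambda>t. \<Sum>l\<in>UNIV. exp (s l + t * h l))"
  define S1 where "S1 = (\<lambda>t. \<Sum>l\<in>UNIV. exp (s l + t * h l) * h l)"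
  define S2 where "S2 = (\<lambda>t. \<Sum>l\<in>UNIV. exp (s l + t * h l) * (h l)\<^sup>2)"
  define B where "B = (\<Sum>l\<in>UNIV. (h l)\<^sup>2)"
  have Spos: "S t > 0" for t unfolding S_def by (intro sum_pos) auto
  have dS: "(S has_real_derivative S1 t) (at t)" for t
    unfolding S_def S1_def by (auto intro!: derivative_eq_intros)
  have dS1: "(S1 has_real_derivative S2 t) (at t)" for t
    unfolding S1_def S2_def by (auto intro!: derivative_eq_intros simp: power2_eq_square mult.assoc)
  define F where "F = (\<lambda>t. ln (S t))"
  define F1 where "F1 = (\<lambda>t. S1 t / S t)"
  define F2 where "F2 = (\<lambda>t. S2 t / S t - (S1 t)\<^sup>2 / (S t)\<^sup>2)"
  define Ls where "Ls = (\<lambda>n. [F, F1, F2] ! n)"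
  have dF: "(F has_real_derivative F1 t) (at t)" for t
    unfolding F_def F1_def using Spos[of t]
    by (auto intro!: derivative_eq_intros dS simp: field_simps)
  have dF1: "(F1 has_real_derivative F2 t) (at t)" for t
    unfolding F1_def F2_def using Spos[of t]
    by (auto intro!: derivative_eq_intros dS dS1 simp: field_simps power2_eq_square)
  have diff: "\<forall>m t. m < 2 \<and> 0 \<le> t \<and> t \<le> 1 \<longrightarrow> (Ls m has_real_derivative Ls (Suc m) t) (at t)"
    using dF dF1 by (auto simp: Ls_def nth_Cons split: nat.splits)
  from Taylor[of 2 Ls F 0 1 0 1, OF _ _ diff]
  obtain t where t: "F 1 = F 0 + F1 0 + F2 t / 2"
    by (auto simp: Ls_def lessThan_nat_numeral)
  have "S2 t \<le> (\<Sum>l\<in>UNIV. B * exp (s l + t * h l))"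
    unfolding S2_def
  proof (rule sum_mono)
    fix l :: 'l
    have "(h l)\<^sup>2 \<le> B" unfolding B_def
      by (rule member_le_sum) auto
    then show "exp (s l + t * h l) * (h l)\<^sup>2 \<le> B * exp (s l + t * h l)"
      by (simp add: mult.commute mult_left_mono)
  qed
  then have "S2 t \<le> B * S t" unfolding S_def by (simp add: sum_distrib_left)
  then have "F2 t \<le> B" unfolding F2_def using Spos[of t]
    by (smt (verit) divide_le_eq zero_le_divide_iff zero_le_power2)
  then have "F 1 \<le> F 0 + F1 0 + B / 2" using t by linarith
  then show ?thesis unfolding F_def F1_def S_def S1_def B_def by simp
qed

lemma lse_lin:
  fixes s h :: "'l::finite \<Rightarrow> real"
  shows "ln (\<Sum>l\<in>UNIV. exp (s l)) + (\<Sum>l\<in>UNIV. exp (s l) * h l) / (\<Sum>l\<in>UNIV. exp (s l))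
     \<le> ln (\<Sum>l\<in>UNIV. exp (s l + h l))"
proof -
  define S where "S = (\<Sum>l\<in>UNIV. exp (s l))"
  define c where "c = (\<Sum>l\<in>UNIV. exp (s l) * h l) / S"
  have Spos: "S > 0" unfolding S_def by (intro sum_pos) auto
  have "(\<Sum>l\<in>UNIV. exp (s l) * (exp c * (1 + (h l - c)))) \<le> (\<Sum>l\<in>UNIV. exp (s l + h l))"
  proof (rule sum_mono)
    fix l
    have "1 + (h l - c) \<le> exp (h l - c)" by (rule exp_ge_add_one_self)
    then have "exp c * (1 + (h l - c)) \<le> exp c * exp (h l - c)" by simp
    also have "\<dots> = exp (h l)" by (simp add: exp_diff)
    finally show "exp (s l) * (exp c * (1 + (h l - c))) \<le> exp (s l + h l)"
      by (simp add: exp_add)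
  qed
  moreover have "(\<Sum>l\<in>UNIV. exp (s l) * (exp c * (1 + (h l - c)))) = exp c * (S + (\<Sum>l\<in>UNIV. exp (s l) * h l) - c * S)"
    unfolding S_def by (simp add: algebra_simps sum.distrib sum_subtractf sum_distrib_left sum_distrib_right)
  moreover have "S + (\<Sum>l\<in>UNIV. exp (s l) * h l) - c * S = S" unfolding c_def using Spos by simp
  ultimately have "exp c * S \<le> (\<Sum>l\<in>UNIV. exp (s l + h l))" by simp
  then have "ln (exp c * S) \<le> ln (\<Sum>l\<in>UNIV. exp (s l + h l))" using Spos by (intro ln_mono) auto
  then show ?thesis using Spos unfolding S_def c_def by (simp add: ln_mult)
qed

lemma frob_add_left: "frob (A + B) X = frob A X + frob B X"
  unfolding frob_def by (simp add: algebra_simps sum.distrib)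
lemma frob_diff_left: "frob (A - B) X = frob A X - frob B X"
  unfolding frob_def by (simp add: algebra_simps sum_subtractf)
lemma frob_scale_left: "frob (c *\<^sub>R A) X = c * frob A X"
  unfolding frob_def by (simp add: algebra_simps sum_distrib_left)
lemma frob_zero_left: "frob 0 X = 0"
  unfolding frob_def by simp
lemma frob_sum_right: "frob X (\<Sum>l\<in>UNIV. c l *\<^sub>R (C l)) = (\<Sum>l\<in>UNIV. c l * frob X (C l))"
proof -
  have "frob X (\<Sum>l\<in>UNIV. c l *\<^sub>R (C l)) = (\<Sum>i\<in>UNIV. \<Sum>j\<in>UNIV. \<Sum>l\<in>UNIV. c l * (X $ i $ j * C l $ i $ j))"
    unfolding frob_def by (simp add: sum_component sum_distrib_left mult.left_commute)
  also have "\<dots> = (\<Sum>i\<in>UNIV. \<Sum>l\<in>UNIV. \<Sum>j\<in>UNIV. c l * (X $ i $ j * C l $ i $ j))"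
    by (rule sum.cong[OF refl], rule sum.swap)
  also have "\<dots> = (\<Sum>l\<in>UNIV. \<Sum>i\<in>UNIV. \<Sum>j\<in>UNIV. c l * (X $ i $ j * C l $ i $ j))"
    by (rule sum.swap)
  also have "\<dots> = (\<Sum>l\<in>UNIV. c l * frob X (C l))"
    unfolding frob_def by (simp add: sum_distrib_left)
  finally show ?thesis .
qed

lemma frob_M: "frob X (M_grad \<eta> C P) = (\<Sum>l\<in>UNIV. exp (frob P (C l) / \<eta>) * (frob X (C l) / \<eta>)) / (\<Sum>l\<in>UNIV. exp (frob P (C l) / \<eta>)) * \<eta>"
  if "\<eta> > 0"
  using that unfolding M_grad_def frob_sum_right alpha_w_def
  by (simp add: sum_divide_distrib sum_distrib_right)

lemma G_smooth:
  assumes "\<eta> > 0"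
  shows "G_eta \<eta> C (P + X) \<le> G_eta \<eta> C P + frob X (M_grad \<eta> C P) + (\<Sum>l\<in>UNIV. (frob X (C l))\<^sup>2) / (2 * \<eta>)"
proof -
  have e: "frob (P + X) (C l) / \<eta> = frob P (C l) / \<eta> + frob X (C l) / \<eta>" for l
    by (simp add: frob_add_left add_divide_distrib)
  have K: "ln (\<Sum>l\<in>UNIV. exp (frob (P + X) (C l) / \<eta>)) \<le> ln (\<Sum>l\<in>UNIV. exp (frob P (C l) / \<eta>))
     + (\<Sum>l\<in>UNIV. exp (frob P (C l) / \<eta>) * (frob X (C l) / \<eta>)) / (\<Sum>l\<in>UNIV. exp (frob P (C l) / \<eta>))
     + (\<Sum>l\<in>UNIV. (frob X (C l) / \<eta>)\<^sup>2) / 2"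
    unfolding e by (rule lse_quad)
  have sq: "(\<Sum>l\<in>UNIV. (frob X (C l) / \<eta>)\<^sup>2) / 2 * \<eta> = (\<Sum>l\<in>UNIV. (frob X (C l))\<^sup>2) / (2 * \<eta>)"
    using assms by (simp add: power_divide sum_divide_distrib[symmetric] power2_eq_square field_simps)
  from mult_right_mono[OF K, of \<eta>] assms show ?thesis
    unfolding G_eta_def frob_M[OF assms] sq[symmetric] by (simp add: algebra_simps)
qed

lemma G_convex:
  assumes "\<eta> > 0"
  shows "G_eta \<eta> C P + frob (Q - P) (M_grad \<eta> C P) \<le> G_eta \<eta> C Q"
proof -
  have e: "frob Q (C l) / \<eta> = frob P (C l) / \<eta> + frob (Q - P) (C l) / \<eta>" for l
    by (simp add: frob_diff_left diff_divide_distrib)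
  have K: "ln (\<Sum>l\<in>UNIV. exp (frob P (C l) / \<eta>))
     + (\<Sum>l\<in>UNIV. exp (frob P (C l) / \<eta>) * (frob (Q - P) (C l) / \<eta>)) / (\<Sum>l\<in>UNIV. exp (frob P (C l) / \<eta>))
     \<le> ln (\<Sum>l\<in>UNIV. exp (frob Q (C l) / \<eta>))"
    unfolding e by (rule lse_lin)
  from mult_right_mono[OF K, of \<eta>] assms show ?thesis
    unfolding G_eta_def frob_M[OF assms] by (simp add: algebra_simps)
qed


lemma sym_inner:
  fixes A :: "real^'k::finite^'k"
  assumes "transpose A = A"
  shows "x \<bullet> (A *v y) = (A *v x) \<bullet> y"
proof -
  have "x \<bullet> (A *v y) = (x v* A) \<bullet> y" by (simp add: dot_lmul_matrix)
  also have "x v* A = transpose A *v x" by simp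
  finally show ?thesis using assms by simp
qed

lemma eig_finite:
  fixes A :: "real^'k::finite^'k"
  assumes sym: "transpose A = A"
  shows "finite {e. \<exists>v. v \<noteq> 0 \<and> A *v v = e *\<^sub>R v}"
proof -
  define E where "E = {e. \<exists>v. v \<noteq> 0 \<and> A *v v = e *\<^sub>R v}"
  define f where "f = (\<lambda>e. SOME v. v \<noteq> 0 \<and> A *v v = e *\<^sub>R v)"
  have f: "f e \<noteq> 0 \<and> A *v f e = e *\<^sub>R f e" if "e \<in> E" for e
  proof -
    from that obtain v where "v \<noteq> 0 \<and> A *v v = e *\<^sub>R v" unfolding E_def by blast
    then show ?thesis unfolding f_def by (rule someI)
  qed
  have orth: "f e1 \<bullet> f e2 = 0" if "e1 \<in> E" "e2 \<in> E" "e1 \<noteq> e2" for e1 e2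
  proof -
    have "e1 * (f e1 \<bullet> f e2) = (A *v f e1) \<bullet> f e2" using f[OF that(1)] by simp
    also have "\<dots> = f e1 \<bullet> (A *v f e2)" using sym_inner[OF sym] by simp
    also have "\<dots> = e2 * (f e1 \<bullet> f e2)" using f[OF that(2)] by simp
    finally show ?thesis using that(3) by simp
  qed
  have inj: "inj_on f E"
  proof (rule inj_onI)
    fix e1 e2 assume "e1 \<in> E" "e2 \<in> E" "f e1 = f e2"
    then show "e1 = e2" using orth[of e1 e2] f[of e1] by auto
  qed
  have "pairwise orthogonal (f ` E)"
    unfolding pairwise_def orthogonal_def using orth by auto
  moreover have "0 \<notin> f ` E" using f by auto
  ultimately have "independent (f ` E)" by (rule pairwise_orthogonal_independent)
  then have "finite (f ` E)" by (rule finiteI_independent)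
  then have "finite E" using inj finite_imageD by blast
  then show ?thesis unfolding E_def .
qed

lemma rayleigh:
  fixes A :: "real^'k::finite^'k"
  assumes sym: "transpose A = A"
  shows "\<exists>\<mu>. (\<exists>v. v \<noteq> 0 \<and> A *v v = \<mu> *\<^sub>R v) \<and> (\<forall>u. u \<bullet> (A *v u) \<le> \<mu> * (u \<bullet> u))"
proof -
  define q where "q = (\<lambda>v. v \<bullet> (A *v v))"
  have cont: "continuous_on (sphere 0 1) q"
    unfolding q_def by (intro continuous_intros linear_continuous_on matrix_vector_mul_linear)
  have ne: "sphere (0::real^'k) 1 \<noteq> {}" by simp
  obtain v where v: "v \<in> sphere 0 1" and vmax: "\<And>y. y \<in> sphere 0 1 \<Longrightarrow> q y \<le> q v"
    using continuous_attains_sup[OF compact_sphere ne cont] by blast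
  define \<mu> where "\<mu> = q v"
  have vv: "v \<bullet> v = 1" using v by (simp add: dot_square_norm)
  have qscale: "q (c *\<^sub>R u) = c\<^sup>2 * q u" for c u
    unfolding q_def by (simp add: matrix_vector_mult_scaleR power2_eq_square)
  have bound: "q u \<le> \<mu> * (u \<bullet> u)" for u
  proof (cases "u = 0")
    case True then show ?thesis by (simp add: q_def)
  next
    case False
    define w where "w = (1 / norm u) *\<^sub>R u"
    have "w \<in> sphere 0 1" using False unfolding w_def by simp
    then have "q w \<le> \<mu>" using vmax unfolding \<mu>_def by blast
    moreover have "q u = (norm u)\<^sup>2 * q w" unfolding w_def qscale using False
      by (simp add: power2_eq_square)
    moreover have "u \<bullet> u = (norm u)\<^sup>2" by (simp add: dot_square_norm)
    ultimately show ?thesis by (simp add: mult_left_mono mult.commute[of \<mu>])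
  qed
  define r where "r = A *v v - \<mu> *\<^sub>R v"
  define a where "a = r \<bullet> r"
  define b where "b = q r - \<mu> * (r \<bullet> r)"
  have quad: "2 * t * a + t\<^sup>2 * b \<le> 0" for t
  proof -
    have i1: "q (v + t *\<^sub>R r) \<le> \<mu> * ((v + t *\<^sub>R r) \<bullet> (v + t *\<^sub>R r))" by (rule bound)
    have e1: "q (v + t *\<^sub>R r) = q v + 2 * t * (r \<bullet> (A *v v)) + t\<^sup>2 * q r"
    proof -
      have "v \<bullet> (A *v r) = r \<bullet> (A *v v)" using sym_inner[OF sym, of v r] by (simp add: inner_commute)
      then show ?thesis unfolding q_def
        by (simp add: matrix_vector_right_distrib matrix_vector_mult_scaleR inner_add_left inner_add_right
            power2_eq_square algebra_simps)
    qed
    have e2: "(v + t *\<^sub>R r) \<bullet> (v + t *\<^sub>R r) = 1 + 2 * t * (r \<bullet> v) + t\<^sup>2 * (r \<bullet> r)"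
      using vv by (simp add: inner_add_left inner_add_right inner_commute power2_eq_square algebra_simps)
    have e3: "a = r \<bullet> (A *v v) - \<mu> * (r \<bullet> v)" unfolding a_def
      by (simp add: r_def inner_diff_right)
    have "2 * t * a + t\<^sup>2 * b = (q v + 2 * t * (r \<bullet> (A *v v)) + t\<^sup>2 * q r) - \<mu> * (1 + 2 * t * (r \<bullet> v) + t\<^sup>2 * (r \<bullet> r))"
      unfolding e3 b_def \<mu>_def by (simp add: algebra_simps)
    also have "\<dots> \<le> 0" using i1 unfolding e1 e2 by simp
    finally show ?thesis .
  qed
  have "a = 0"
  proof (rule ccontr)
    assume "a \<noteq> 0"
    then have apos: "a > 0" unfolding a_def by simp
    define t where "t = a / (\<bar>b\<bar> + 1)"
    have tpos: "t > 0" using apos unfolding t_def by (simp add: add_pos_nonneg)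
    have tb: "t * \<bar>b\<bar> \<le> a" unfolding t_def using apos
      by (simp add: divide_le_eq pos_add_strict mult_left_mono add_nonneg_pos)
    have "t * (- \<bar>b\<bar>) \<le> t * b" using tpos by (intro mult_left_mono) auto
    then have "t * b \<ge> - (t * \<bar>b\<bar>)" by simp
    then have "t * b \<ge> - a" using tb by linarith
    then have "t * (t * b) \<ge> t * (- a)" using tpos by (intro mult_left_mono) auto
    then have "t\<^sup>2 * b \<ge> - t * a" by (simp add: power2_eq_square mult.assoc)
    moreover have "t * a > 0" using tpos apos by simp
    ultimately have "2 * t * a + t\<^sup>2 * b > 0" by linarith
    then show False using quad[of t] by simp
  qed
  then have "r = 0" unfolding a_def by simp
  then have "A *v v = \<mu> *\<^sub>R v" unfolding r_def by simp
  moreover have "v \<noteq> 0" using v by auto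
  ultimately show ?thesis using bound unfolding q_def by blast
qed


lemma sum_sq_frob_le:
  fixes C :: "'l::finite \<Rightarrow> real^'m::finite^'n::finite" and X :: "real^'m^'n"
  shows "(\<Sum>l\<in>UNIV. (frob X (C l))\<^sup>2) \<le> max_eigenvalue (transpose (Phi_mat C) ** Phi_mat C) * frob X X
         \<and> 0 \<le> max_eigenvalue (transpose (Phi_mat C) ** Phi_mat C)"
proof -
  define \<Phi> where "\<Phi> = Phi_mat C"
  define A where "A = transpose \<Phi> ** \<Phi>"
  have sym: "transpose A = A" unfolding A_def by (simp add: matrix_transpose_mul)
  have qA: "u \<bullet> (A *v u) = (\<Phi> *v u) \<bullet> (\<Phi> *v u)" for u
  proof -
    have "A *v u = transpose \<Phi> *v (\<Phi> *v u)" unfolding A_def by (simp add: matrix_vector_mul_assoc)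
    moreover have "u \<bullet> (transpose \<Phi> *v w) = (\<Phi> *v u) \<bullet> w" for w
      using dot_lmul_matrix[of u "transpose \<Phi>" w] by simp
    ultimately show ?thesis by simp
  qed
  obtain \<mu> v where v: "v \<noteq> 0" "A *v v = \<mu> *\<^sub>R v" and ray: "\<And>u. u \<bullet> (A *v u) \<le> \<mu> * (u \<bullet> u)"
    using rayleigh[OF sym] by blast
  have "\<mu> \<le> Max {e. \<exists>v. v \<noteq> 0 \<and> A *v v = e *\<^sub>R v}"
    using eig_finite[OF sym] v by (intro Max_ge) auto
  then have mu_le: "\<mu> \<le> max_eigenvalue A" unfolding max_eigenvalue_def .
  have "\<mu> * (v \<bullet> v) = v \<bullet> (A *v v)" using v by simp
  also have "\<dots> \<ge> 0" unfolding qA by simp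
  finally have "\<mu> \<ge> 0" using v(1)
    by (metis inner_gt_zero_iff zero_le_mult_iff linorder_not_le)
  define y :: "real^('n\<times>'m)" where "y = (\<chi> ij. X $ fst ij $ snd ij)"
  define u where "u = transpose \<Phi> *v y"
  have sum_pair: "(\<Sum>p\<in>(UNIV::('n\<times>'m) set). f p) = (\<Sum>i\<in>UNIV. \<Sum>j\<in>UNIV. f (i, j))" for f :: "'n\<times>'m \<Rightarrow> real"
    by (simp add: sum.cartesian_product UNIV_Times_UNIV[symmetric] del: UNIV_Times_UNIV)
  have ul: "u $ l = frob X (C l)" for l
    unfolding u_def y_def \<Phi>_def Phi_mat_def frob_def
    by (simp add: matrix_vector_mult_def transpose_def sum_pair mult.commute)
  have uu: "(\<Sum>l\<in>UNIV. (frob X (C l))\<^sup>2) = u \<bullet> u"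
    by (simp add: inner_vec_def ul power2_eq_square)
  have yy: "frob X X = y \<bullet> y"
    by (simp add: inner_vec_def y_def frob_def sum_pair)
  have "u \<bullet> u = (\<Phi> *v u) \<bullet> y"
    unfolding u_def[symmetric] using dot_lmul_matrix[of u "transpose \<Phi>" y] by (simp add: u_def)
  then have "(u \<bullet> u)\<^sup>2 \<le> ((\<Phi> *v u) \<bullet> (\<Phi> *v u)) * (y \<bullet> y)"
    by (metis Cauchy_Schwarz_ineq)
  also have "\<dots> \<le> (\<mu> * (u \<bullet> u)) * (y \<bullet> y)"
    using ray[of u] unfolding qA by (intro mult_right_mono) auto
  finally have sq: "(u \<bullet> u)\<^sup>2 \<le> (u \<bullet> u) * (\<mu> * (y \<bullet> y))" by (simp add: algebra_simps)
  have "u \<bullet> u \<le> \<mu> * (y \<bullet> y)"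
  proof (cases "u \<bullet> u = 0")
    case True then show ?thesis using \<open>\<mu> \<ge> 0\<close> by simp
  next
    case False
    then have "u \<bullet> u > 0" by (simp add: order_le_neq_trans)
    then show ?thesis using sq by (simp add: power2_eq_square)
  qed
  also have "\<dots> \<le> max_eigenvalue A * (y \<bullet> y)" using mu_le by (intro mult_right_mono) auto
  finally show ?thesis using uu yy mu_le \<open>\<mu> \<ge> 0\<close> unfolding A_def \<Phi>_def by simp
qed

lemma D_entries:
  assumes "P \<in> transport_polytope a b" and "(\<Sum>i\<in>UNIV. a $ i) = 1"
  shows "0 \<le> P $ i $ j \<and> P $ i $ j \<le> 1" and "(\<Sum>i\<in>UNIV. \<Sum>j\<in>UNIV. P $ i $ j) = 1"
proof -
  have nn: "\<And>i j. 0 \<le> P $ i $ j" and row: "\<And>i. (\<Sum>j\<in>UNIV. P $ i $ j) = a $ i"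
    using assms(1) unfolding transport_polytope_def by auto
  show tot: "(\<Sum>i\<in>UNIV. \<Sum>j\<in>UNIV. P $ i $ j) = 1" using row assms(2) by simp
  have "P $ i $ j \<le> (\<Sum>j\<in>UNIV. P $ i $ j)" by (rule member_le_sum) (auto simp: nn)
  also have "\<dots> \<le> (\<Sum>i\<in>UNIV. \<Sum>j\<in>UNIV. P $ i $ j)"
    by (rule member_le_sum[where f = "\<lambda>i. \<Sum>j\<in>UNIV. P $ i $ j"]) (auto intro: sum_nonneg nn)
  finally show "0 \<le> P $ i $ j \<and> P $ i $ j \<le> 1" using tot nn by simp
qed

lemma diam:
  assumes "P \<in> transport_polytope a b" "Q \<in> transport_polytope a b" and "(\<Sum>i\<in>UNIV. a $ i) = 1"
  shows "frob (Q - P) (Q - P) \<le> 2"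
proof -
  have "frob (Q - P) (Q - P) \<le> (\<Sum>i\<in>UNIV. \<Sum>j\<in>UNIV. Q $ i $ j + P $ i $ j)"
    unfolding frob_def
  proof (intro sum_mono)
    fix i j
    have p: "0 \<le> P $ i $ j \<and> P $ i $ j \<le> 1" and q: "0 \<le> Q $ i $ j \<and> Q $ i $ j \<le> 1"
      using D_entries(1)[OF assms(1,3)] D_entries(1)[OF assms(2,3)] by auto
    define d where "d = Q $ i $ j - P $ i $ j"
    have d1: "\<bar>d\<bar> \<le> 1" using p q unfolding d_def by linarith
    have d2: "\<bar>d\<bar> \<le> Q $ i $ j + P $ i $ j" using p q unfolding d_def by linarith
    have "d * d = \<bar>d\<bar> * \<bar>d\<bar>" by (simp add: abs_mult_self_eq)
    also have "\<dots> \<le> \<bar>d\<bar>" using d1 by (intro mult_left_le_one_le) auto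
    finally show "(Q - P) $ i $ j * (Q - P) $ i $ j \<le> Q $ i $ j + P $ i $ j"
      using d2 unfolding d_def by simp
  qed
  also have "\<dots> = 2" using D_entries(2)[OF assms(1,3)] D_entries(2)[OF assms(2,3)]
    by (simp add: sum.distrib)
  finally show ?thesis .
qed

lemma D_convex:
  assumes "P \<in> transport_polytope a b" "Q \<in> transport_polytope a b" "0 \<le> g" "g \<le> 1"
  shows "(1 - g) *\<^sub>R P + g *\<^sub>R Q \<in> transport_polytope a b"
proof -
  have nP: "\<And>i j. 0 \<le> P $ i $ j" and rP: "\<And>i. (\<Sum>j\<in>UNIV. P $ i $ j) = a $ i"
    and cP: "\<And>j. (\<Sum>i\<in>UNIV. P $ i $ j) = b $ j"
    using assms(1) unfolding transport_polytope_def by auto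
  have nQ: "\<And>i j. 0 \<le> Q $ i $ j" and rQ: "\<And>i. (\<Sum>j\<in>UNIV. Q $ i $ j) = a $ i"
    and cQ: "\<And>j. (\<Sum>i\<in>UNIV. Q $ i $ j) = b $ j"
    using assms(2) unfolding transport_polytope_def by auto
  have e: "((1 - g) *\<^sub>R P + g *\<^sub>R Q) $ i $ j = (1 - g) * P $ i $ j + g * Q $ i $ j" for i j by simp
  show ?thesis unfolding transport_polytope_def mem_Collect_eq e
  proof (intro conjI allI)
    fix i j show "0 \<le> (1 - g) * P $ i $ j + g * Q $ i $ j"
      using assms(3,4) nP[of i j] nQ[of i j] by simp
  next
    fix i
    have "(\<Sum>j\<in>UNIV. (1 - g) * P $ i $ j + g * Q $ i $ j) = (1 - g) * (\<Sum>j\<in>UNIV. P $ i $ j) + g * (\<Sum>j\<in>UNIV. Q $ i $ j)"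
      by (simp add: sum.distrib sum_distrib_left)
    then show "(\<Sum>j\<in>UNIV. (1 - g) * P $ i $ j + g * Q $ i $ j) = a $ i"
      by (simp add: rP rQ algebra_simps)
  next
    fix j
    have "(\<Sum>i\<in>UNIV. (1 - g) * P $ i $ j + g * Q $ i $ j) = (1 - g) * (\<Sum>i\<in>UNIV. P $ i $ j) + g * (\<Sum>i\<in>UNIV. Q $ i $ j)"
      by (simp add: sum.distrib sum_distrib_left)
    then show "(\<Sum>i\<in>UNIV. (1 - g) * P $ i $ j + g * Q $ i $ j) = b $ j"
      by (simp add: cP cQ algebra_simps)
  qed
qed

lemma frob_lower:
  assumes "Q \<in> transport_polytope a b" and "(\<Sum>i\<in>UNIV. a $ i) = 1"
  shows "- (\<Sum>i\<in>UNIV. \<Sum>j\<in>UNIV. \<bar>M $ i $ j\<bar>) \<le> frob Q M"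
proof -
  have "(\<Sum>i\<in>UNIV. \<Sum>j\<in>UNIV. - \<bar>M $ i $ j\<bar>) \<le> frob Q M"
    unfolding frob_def
  proof (intro sum_mono)
    fix i j
    have q: "0 \<le> Q $ i $ j \<and> Q $ i $ j \<le> 1" using D_entries(1)[OF assms] by auto
    have "\<bar>Q $ i $ j * M $ i $ j\<bar> \<le> \<bar>M $ i $ j\<bar>" using q
      by (simp add: abs_mult mult_left_le_one_le)
    then show "- \<bar>M $ i $ j\<bar> \<le> Q $ i $ j * M $ i $ j" by linarith
  qed
  then show ?thesis by (simp add: sum_negf)
qed


lemma a1: fixes y K :: real assumes "y > 0" shows "(1 - 2 / y) * (2 * K / y) + (2 / y)\<^sup>2 / 2 * K = 2 * K * (y - 1) / y\<^sup>2"
  using assms by (simp add: field_simps power2_eq_square)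
lemma a2: fixes y K :: real assumes "y > 0" "K \<ge> 0" shows "2 * K * (y - 1) / y\<^sup>2 \<le> 2 * K / (y + 1)"
proof -
  have "(y - 1) * (y + 1) \<le> y\<^sup>2" by (simp add: power2_eq_square algebra_simps)
  then have "2 * K * ((y - 1) * (y + 1)) \<le> 2 * K * y\<^sup>2"
    using assms by (intro mult_left_mono) auto
  then have "2 * K * (y - 1) * (y + 1) \<le> 2 * K * y\<^sup>2" by (simp add: mult.assoc)
  then show ?thesis using assms by (simp add: field_simps)
qed

lemma arith_step:
  fixes x K h :: real
  assumes "x \<ge> 0" "K \<ge> 0" "h \<le> 2 * K / (x + 2)"
  shows "(1 - 2 / (x + 2)) * h + (2 / (x + 2))\<^sup>2 / 2 * K \<le> 2 * K / (x + 1 + 2)"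
proof -
  have y: "x + 2 > 0" using assms(1) by simp
  have g: "0 \<le> 1 - 2 / (x + 2)" using assms(1) by (simp add: field_simps)
  have "(1 - 2 / (x + 2)) * h \<le> (1 - 2 / (x + 2)) * (2 * K / (x + 2))"
    using assms(3) g by (rule mult_left_mono)
  moreover have "(1 - 2 / (x + 2)) * (2 * K / (x + 2)) + (2 / (x + 2))\<^sup>2 / 2 * K = 2 * K * (x + 2 - 1) / (x + 2)\<^sup>2"
    by (rule a1[OF y])
  moreover have "2 * K * (x + 2 - 1) / (x + 2)\<^sup>2 \<le> 2 * K / (x + 2 + 1)"
    by (rule a2[OF y assms(2)])
  moreover have "2 * K / (x + 2 + 1) = 2 * K / (x + 1 + 2)" by (simp add: algebra_simps)
  ultimately show ?thesis by linarith
qed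

lemma l1: fixes g S \<eta> :: real assumes "0 < g" "0 < \<eta>" shows "2 / g\<^sup>2 * (g\<^sup>2 * S / (2 * \<eta>)) = S / \<eta>"
  using assms by (simp add: field_simps)
lemma l2: fixes g E Cf :: real assumes "0 < g" "2 / g\<^sup>2 * E \<le> Cf" shows "E \<le> g\<^sup>2 / 2 * Cf"
proof -
  have "E = g\<^sup>2 / 2 * (2 / g\<^sup>2 * E)" using assms(1) by simp
  also have "\<dots> \<le> g\<^sup>2 / 2 * Cf" using assms(2) by (intro mult_left_mono) auto
  finally show ?thesis .
qed
lemma l3: fixes \<sigma> \<eta> \<delta> x :: real assumes "0 < \<eta>" "0 \<le> x"
  shows "2 * (2 * \<sigma> / \<eta>) * (1 + \<delta>) / (x + 2) = 4 * \<sigma> / (\<eta> * (x + 2)) * (1 + \<delta>)"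
  using assms by (simp add: field_simps)
lemma final_arith:
  fixes \<eta> \<sigma> \<delta> Cf K h x :: real
  assumes "\<eta> > 0" "x \<ge> 0" "\<delta> \<ge> 0" "Cf \<le> 2 * \<sigma> / \<eta>" "K = Cf * (1 + \<delta>)" "h \<le> 2 * K / (x + 2)"
  shows "h \<le> 4 * \<sigma> / (\<eta> * (x + 2)) * (1 + \<delta>)"
proof -
  have "2 * K = 2 * Cf * (1 + \<delta>)" using assms(5) by simp
  also have "\<dots> \<le> 2 * (2 * \<sigma> / \<eta>) * (1 + \<delta>)"
    using assms(3,4) by (intro mult_right_mono) auto
  finally have "2 * K / (x + 2) \<le> 2 * (2 * \<sigma> / \<eta>) * (1 + \<delta>) / (x + 2)"
    using assms(2) by (intro divide_right_mono) auto
  also have "\<dots> = 4 * \<sigma> / (\<eta> * (x + 2)) * (1 + \<delta>)" by (rule l3[OF assms(1,2)])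
  finally show ?thesis using assms(6) by linarith
qed

theorem proposition3:
  fixes \<eta> \<delta> :: real
    and a :: "real^'n::finite" and b :: "real^'m::finite"
    and C :: "'l::finite \<Rightarrow> real^'m^'n"
    and Pstar :: "real^'m^'n"
    and P :: "nat \<Rightarrow> real^'m^'n"
  assumes eta_pos: "\<eta> > 0"
    and a_nonneg: "\<forall>i. a $ i \<ge> 0" and b_nonneg: "\<forall>j. b $ j \<ge> 0"
    and a_sum: "(\<Sum>i\<in>UNIV. a $ i) = 1" and b_sum: "(\<Sum>j\<in>UNIV. b $ j) = 1"
    and Pstar_mem: "Pstar \<in> transport_polytope a b"
    and Pstar_min: "\<forall>Q \<in> transport_polytope a b. G_eta \<eta> C Pstar \<le> G_eta \<eta> C Q"
    and delta_nonneg: "\<delta> \<ge> 0"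
    and P0: "P 0 \<in> transport_polytope a b"
    and step: "\<forall>t::nat. \<exists>Phat \<in> transport_polytope a b.
        frob Phat (M_grad \<eta> C (P t))
          \<le> (INF Q \<in> transport_polytope a b. frob Q (M_grad \<eta> C (P t)))
             + 1/2 * \<delta> * (2 / (real t + 2)) * curvature_const \<eta> C (transport_polytope a b)
        \<and> P (Suc t) = (1 - 2 / (real t + 2)) *\<^sub>R P t + (2 / (real t + 2)) *\<^sub>R Phat"
  shows "\<forall>t::nat. t \<ge> 1 \<longrightarrow>
           G_eta \<eta> C (P t) - G_eta \<eta> C Pstar
             \<le> 4 * max_eigenvalue (transpose (Phi_mat C) ** Phi_mat C) / (\<eta> * (real t + 2)) * (1 + \<delta>)"
proof -
  define D where "D = transport_polytope a b"
  define \<sigma> where "\<sigma> = max_eigenvalue (transpose (Phi_mat C) ** Phi_mat C)"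
  define Cf where "Cf = curvature_const \<eta> C D"
  define T where "T = {(P, Q, \<gamma>). P \<in> D \<and> Q \<in> D \<and> 0 < \<gamma> \<and> (\<gamma>::real) \<le> 1}"
  define F where "F = (\<lambda>(P::real^'m^'n, Q::real^'m^'n, \<gamma>::real).
        2 / \<gamma>\<^sup>2 * (G_eta \<eta> C (P + \<gamma> *\<^sub>R (Q - P)) - G_eta \<eta> C P
                     - frob ((P + \<gamma> *\<^sub>R (Q - P)) - P) (M_grad \<eta> C P)))"
  have Cf_eq: "Cf = Sup (F ` T)"
    unfolding Cf_def curvature_const_def F_def T_def ..
  have sig_nn: "0 \<le> \<sigma>" using sum_sq_frob_le[where C=C and X=0] unfolding \<sigma>_def by simp
  have Fb: "F x \<le> 2 * \<sigma> / \<eta>" if "x \<in> T" for x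
  proof -
    obtain P0' Q g where x: "x = (P0', Q, g)" by (cases x) auto
    have PQ: "P0' \<in> D" "Q \<in> D" and g: "0 < g" "g \<le> 1"
      using that unfolding T_def x by auto
    define X where "X = g *\<^sub>R (Q - P0')"
    have sm: "G_eta \<eta> C (P0' + X) \<le> G_eta \<eta> C P0' + frob X (M_grad \<eta> C P0') + (\<Sum>l\<in>UNIV. (frob X (C l))\<^sup>2) / (2 * \<eta>)"
      by (rule G_smooth[OF eta_pos])
    have sq: "(\<Sum>l\<in>UNIV. (frob X (C l))\<^sup>2) = g\<^sup>2 * (\<Sum>l\<in>UNIV. (frob (Q - P0') (C l))\<^sup>2)"
      unfolding X_def frob_scale_left by (simp add: power_mult_distrib sum_distrib_left)
    have "F x = 2 / g\<^sup>2 * (G_eta \<eta> C (P0' + X) - G_eta \<eta> C P0' - frob X (M_grad \<eta> C P0'))"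
      unfolding x F_def X_def by simp
    also have "\<dots> \<le> 2 / g\<^sup>2 * ((\<Sum>l\<in>UNIV. (frob X (C l))\<^sup>2) / (2 * \<eta>))"
      using sm by (intro mult_left_mono) auto
    also have "\<dots> = (\<Sum>l\<in>UNIV. (frob (Q - P0') (C l))\<^sup>2) / \<eta>"
      unfolding sq using g(1) eta_pos by (rule l1)
    also have "\<dots> \<le> (\<sigma> * frob (Q - P0') (Q - P0')) / \<eta>"
      using sum_sq_frob_le[where C=C and X="Q - P0'"] eta_pos unfolding \<sigma>_def by (intro divide_right_mono) auto
    also have "\<dots> \<le> (\<sigma> * 2) / \<eta>"
      using diam[OF PQ[unfolded D_def] a_sum] sig_nn eta_pos by (intro divide_right_mono mult_left_mono) auto
    finally show ?thesis by (simp add: mult.commute)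
  qed
  have bdd: "bdd_above (F ` T)" using Fb by (intro bdd_aboveI2) 
  have PsT: "(Pstar, Pstar, 1) \<in> T" using Pstar_mem unfolding T_def D_def by simp
  have Fle: "F x \<le> Cf" if "x \<in> T" for x unfolding Cf_eq by (rule cSUP_upper[OF that bdd])
  have Cf_le: "Cf \<le> 2 * \<sigma> / \<eta>" unfolding Cf_eq using PsT Fb by (intro cSUP_least) auto
  have Cf_nn: "0 \<le> Cf" using Fle[OF PsT] unfolding F_def by (simp add: frob_zero_left)
  have PD: "P t \<in> D" for t
  proof (induction t)
    case 0 then show ?case using P0 unfolding D_def .
  next
    case (Suc t)
    obtain Ph where Ph: "Ph \<in> D" and eq: "P (Suc t) = (1 - 2 / (real t + 2)) *\<^sub>R P t + (2 / (real t + 2)) *\<^sub>R Ph"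
      using step unfolding D_def by blast
    show ?case unfolding eq D_def
      by (rule D_convex[OF Suc[unfolded D_def] Ph[unfolded D_def]]) auto
  qed
  define Gs where "Gs = G_eta \<eta> C Pstar"
  define K where "K = Cf * (1 + \<delta>)"
  have K_nn: "0 \<le> K" unfolding K_def using Cf_nn delta_nonneg by simp
  have recur: "G_eta \<eta> C (P (Suc t)) - Gs \<le> (1 - 2 / (real t + 2)) * (G_eta \<eta> C (P t) - Gs) + (2 / (real t + 2))\<^sup>2 / 2 * K" for t
  proof -
    define g where "g = 2 / (real t + 2)"
    have g: "0 < g" "g \<le> 1" unfolding g_def by auto
    define Mt where "Mt = M_grad \<eta> C (P t)"
    obtain Ph where Ph: "Ph \<in> D" and appr: "frob Ph Mt \<le> (INF Q \<in> D. frob Q Mt) + 1/2 * \<delta> * g * Cf"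
      and eq: "P (Suc t) = (1 - g) *\<^sub>R P t + g *\<^sub>R Ph"
      using step unfolding D_def g_def Mt_def Cf_def by blast
    have eq2: "P (Suc t) = P t + g *\<^sub>R (Ph - P t)" unfolding eq by (simp add: algebra_simps)
    have "F (P t, Ph, g) \<le> Cf" using Fle PD Ph g unfolding T_def by auto
    then have "2 / g\<^sup>2 * (G_eta \<eta> C (P (Suc t)) - G_eta \<eta> C (P t) - g * frob (Ph - P t) Mt) \<le> Cf"
      unfolding F_def eq2 Mt_def by (simp add: frob_scale_left)
    then have A: "G_eta \<eta> C (P (Suc t)) - G_eta \<eta> C (P t) - g * frob (Ph - P t) Mt \<le> g\<^sup>2 / 2 * Cf"
      by (rule l2[OF g(1)])
    have bddb: "bdd_below ((\<lambda>Q. frob Q Mt) ` D)"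
      using frob_lower[OF _ a_sum] unfolding D_def by (intro bdd_belowI2) auto
    have "(INF Q \<in> D. frob Q Mt) \<le> frob Pstar Mt"
      using Pstar_mem unfolding D_def by (intro cINF_lower bddb[unfolded D_def]) auto
    then have B: "frob Ph Mt \<le> frob Pstar Mt + 1/2 * \<delta> * g * Cf" using appr by linarith
    have Cv: "G_eta \<eta> C (P t) + frob (Pstar - P t) Mt \<le> Gs"
      unfolding Gs_def Mt_def by (rule G_convex[OF eta_pos])
    have "frob (Ph - P t) Mt \<le> Gs - G_eta \<eta> C (P t) + 1/2 * \<delta> * g * Cf"
      using B Cv by (simp add: frob_diff_left)
    then have "g * frob (Ph - P t) Mt \<le> g * (Gs - G_eta \<eta> C (P t) + 1/2 * \<delta> * g * Cf)"
      using g by (intro mult_left_mono) auto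
    then have "G_eta \<eta> C (P (Suc t)) - Gs \<le> (1 - g) * (G_eta \<eta> C (P t) - Gs) + g\<^sup>2 / 2 * Cf + g * (1/2 * \<delta> * g * Cf)"
      using A by (simp add: algebra_simps)
    also have "\<dots> = (1 - g) * (G_eta \<eta> C (P t) - Gs) + g\<^sup>2 / 2 * K"
      unfolding K_def by (simp add: algebra_simps power2_eq_square)
    finally show ?thesis unfolding g_def .
  qed
  have main: "G_eta \<eta> C (P t) - Gs \<le> 2 * K / (real t + 2)" if "t \<ge> 1" for t
    using that
  proof (induction t rule: nat_induct_at_least)
    case base
    have "G_eta \<eta> C (P 1) - Gs \<le> K / 2" using recur[of 0] by simp
    also have "\<dots> \<le> 2 * K / (real 1 + 2)" using K_nn by simp
    finally show ?case .
  next
    case (Suc t)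
    have "G_eta \<eta> C (P (Suc t)) - Gs \<le> 2 * K / (real t + 1 + 2)"
      using recur[of t] arith_step[of "real t" K "G_eta \<eta> C (P t) - Gs"] Suc K_nn by linarith
    then show ?case by simp
  qed
  have fin: "G_eta \<eta> C (P t) - Gs \<le> 4 * \<sigma> / (\<eta> * (real t + 2)) * (1 + \<delta>)" if t: "t \<ge> 1" for t
  proof -
    have x0: "0 \<le> real t" by simp
    show ?thesis using final_arith[OF eta_pos x0 delta_nonneg Cf_le K_def main[OF t]] .
  qed
  show ?thesis
  proof (intro allI impI)
    fix t :: nat assume t1: "1 \<le> t"
    show "G_eta \<eta> C (P t) - G_eta \<eta> C Pstar
             \<le> 4 * max_eigenvalue (transpose (Phi_mat C) ** Phi_mat C) / (\<eta> * (real t + 2)) * (1 + \<delta>)"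
      using fin[OF t1] unfolding Gs_def \<sigma>_def .
  qed
qed

end
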